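(* Let $X$ be a compact metric space, $f_1,f_2:X\to X$ continuous and $F=\{f_1,f_2\}$. Suppose $F$ has the (Hausdorff metric) shadowing property. Then $F$ is chain mixing if and only if $F$ is mixing.
   Context: Throughout, $(X,d)$ is a compact metric space, $\mathbb{N}=\{0,1,2,\dots\}$, $\mathbb{Z}^+=\{1,2,\dots\}$. $\mathbb{K}(X)$ is the set of nonempty compact subsets of $X$ with the Hausdorff metric $d_H(A,B)=\max\{\sup_{a\in A}\inf_{b\in B}d(a,b),\sup_{b\in B}\inf_{a\in A}d(a,b)\}$; a point $x$ is identified with $\{x\}$. Multiple mappings: $F=\{f_1,f_2\}$ maps $x$ to $F(x)=\{f_1(x),f_2(x)\}$; for $n\ge1$, $F^n(x)=\{f_{i_1}\cdots f_{i_n}(x): i_1,\dots,i_n\in\{1,2\}\}$, $F^0(x)=\{x\}$; for $A\in\mathbb{K}(X)$, $F^n(A)=\bigcup_{a\in A}F^n(a)$. Let $Ran(F)=\{F^n(x): n\ge1, x\in X\}\subset\mathbb{K}(X)$, with the topology induced by $d_H$. Shadowing: a sequence $\{A_n\}_{n\ge0}\subset\mathbb{K}(X)$ with $A_0$ a singleton is a $\delta$-pseudo orbit of $F$ if $d_H(F(A_n),A_{n+1})\le\delta$ for all $n\in\mathbb{N}$. $F$ has the shadowing property if for every $\epsilon>0$ there is $\delta>0$ such that for every $\delta$-pseudo orbit $\{A_n\}$ there is $y\in X$ with $d_H(F^n(y),A_n)<\epsilon$ for all $n\in\mathbb{N}$. A $\delta$-chain of $F$ from $x\in X$ to $A\in\mathbb{K}(X)$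 of length $m$ is a finite sequence $A_0=\{x\},A_1,\dots,A_m=A$ in $\mathbb{K}(X)$ with $d_H(F(A_i),A_{i+1})\le\delta$ for $0\le i<m$. $F$ is mixing if for all nonempty open $U\subset X$ and nonempty open $\mathcal U\subset Ran(F)$ there is $N\in\mathbb{Z}^+$ such that $\{F^n(u):u\in U\}\cap\mathcal U\ne\emptyset$ for all $n\ge N$. $F$ is chain mixing if for all $x\in X$, $A\in Ran(F)$ and $\delta>0$ there is $N\in\mathbb{Z}^+$ such that for every $n\ge N$ there is a $\delta$-chain of $F$ from $x$ to $A$ of length $n$. *)

theory Defs
  imports "HOL-Analysis.Analysis"
begin

text \<open>Hausdorff distance (used only on nonempty compact sets, where the suprema are attained).\<close>
definition hdist :: "'a::metric_space set \<Rightarrow> 'a set \<Rightarrow> real" where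
  "hdist A B = max (SUP a\<in>A. infdist a B) (SUP b\<in>B. infdist b A)"

definition KX :: "'a::metric_space set \<Rightarrow> 'a set set" where
  "KX X = {A. A \<noteq> {} \<and> compact A \<and> A \<subseteq> X}"

definition Fimg :: "('a \<Rightarrow> 'a) \<Rightarrow> ('a \<Rightarrow> 'a) \<Rightarrow> 'a set \<Rightarrow> 'a set" where
  "Fimg f1 f2 A = f1 ` A \<union> f2 ` A"

definition Fpow :: "('a \<Rightarrow> 'a) \<Rightarrow> ('a \<Rightarrow> 'a) \<Rightarrow> nat \<Rightarrow> 'a set \<Rightarrow> 'a set" where
  "Fpow f1 f2 n A = (Fimg f1 f2 ^^ n) A"

definition Ran :: "'a set \<Rightarrow> ('a \<Rightarrow> 'a) \<Rightarrow> ('a \<Rightarrow> 'a) \<Rightarrow> 'a set set" where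
  "Ran X f1 f2 = {Fpow f1 f2 n {x} | n x. n \<ge> 1 \<and> x \<in> X}"

definition open_in_Ran :: "'a::metric_space set \<Rightarrow> ('a \<Rightarrow> 'a) \<Rightarrow> ('a \<Rightarrow> 'a) \<Rightarrow> 'a set set \<Rightarrow> bool" where
  "open_in_Ran X f1 f2 \<U> \<longleftrightarrow> \<U> \<subseteq> Ran X f1 f2 \<and>
     (\<forall>A\<in>\<U>. \<exists>e>0. \<forall>B\<in>Ran X f1 f2. hdist A B < e \<longrightarrow> B \<in> \<U>)"

definition pseudo_orbit :: "'a::metric_space set \<Rightarrow> ('a \<Rightarrow> 'a) \<Rightarrow> ('a \<Rightarrow> 'a) \<Rightarrow> real \<Rightarrow> (nat \<Rightarrow> 'a set) \<Rightarrow> bool" where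
  "pseudo_orbit X f1 f2 \<delta> A \<longleftrightarrow> (\<forall>n. A n \<in> KX X) \<and> (\<exists>x. A 0 = {x}) \<and>
     (\<forall>n. hdist (Fimg f1 f2 (A n)) (A (Suc n)) \<le> \<delta>)"

definition has_shadowing :: "'a::metric_space set \<Rightarrow> ('a \<Rightarrow> 'a) \<Rightarrow> ('a \<Rightarrow> 'a) \<Rightarrow> bool" where
  "has_shadowing X f1 f2 \<longleftrightarrow> (\<forall>\<epsilon>>0. \<exists>\<delta>>0. \<forall>A. pseudo_orbit X f1 f2 \<delta> A \<longrightarrow>
     (\<exists>y\<in>X. \<forall>n. hdist (Fpow f1 f2 n {y}) (A n) < \<epsilon>))"

definition is_chain :: "'a::metric_space set \<Rightarrow> ('a \<Rightarrow> 'a) \<Rightarrow> ('a \<Rightarrow> 'a) \<Rightarrow> real \<Rightarrow> 'a \<Rightarrow> 'a set \<Rightarrow> nat \<Rightarrow> (nat \<Rightarrow> 'a set) \<Rightarrow> bool" where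
  "is_chain X f1 f2 \<delta> x A m C \<longleftrightarrow> C 0 = {x} \<and> C m = A \<and> (\<forall>i\<le>m. C i \<in> KX X) \<and>
     (\<forall>i<m. hdist (Fimg f1 f2 (C i)) (C (Suc i)) \<le> \<delta>)"

definition chain_mixing :: "'a::metric_space set \<Rightarrow> ('a \<Rightarrow> 'a) \<Rightarrow> ('a \<Rightarrow> 'a) \<Rightarrow> bool" where
  "chain_mixing X f1 f2 \<longleftrightarrow> (\<forall>x\<in>X. \<forall>A\<in>Ran X f1 f2. \<forall>\<delta>>0. \<exists>N\<ge>1. \<forall>n\<ge>N.
     \<exists>C. is_chain X f1 f2 \<delta> x A n C)"

definition mixing :: "'a::metric_space set \<Rightarrow> ('a \<Rightarrow> 'a) \<Rightarrow> ('a \<Rightarrow> 'a) \<Rightarrow> bool" where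
  "mixing X f1 f2 \<longleftrightarrow> (\<forall>U \<U>. openin (top_of_set X) U \<and> U \<noteq> {} \<and>
     open_in_Ran X f1 f2 \<U> \<and> \<U> \<noteq> {} \<longrightarrow>
     (\<exists>N\<ge>1. \<forall>n\<ge>N. \<exists>u\<in>U. Fpow f1 f2 n {u} \<in> \<U>))"

end

theory Submission
  imports Defs
begin

lemma Fpow_0[simp]: "Fpow f1 f2 0 A = A" by (simp add: Fpow_def)
lemma Fpow_Suc: "Fpow f1 f2 (Suc n) A = Fimg f1 f2 (Fpow f1 f2 n A)" by (simp add: Fpow_def)

lemma Fpow_fin:
  assumes "finite A" "A \<noteq> {}" "A \<subseteq> X" "f1 ` X \<subseteq> X" "f2 ` X \<subseteq> X"
  shows "finite (Fpow f1 f2 n A) \<and> Fpow f1 f2 n A \<noteq> {} \<and> Fpow f1 f2 n A \<subseteq> X"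
proof (induction n)
  case 0 then show ?case using assms by simp
next
  case (Suc n) then show ?case using assms by (simp add: Fpow_Suc Fimg_def image_subset_iff) blast
qed

lemma fin_KX: "finite A \<Longrightarrow> A \<noteq> {} \<Longrightarrow> A \<subseteq> X \<Longrightarrow> A \<in> KX X"
  by (simp add: KX_def finite_imp_compact)

lemma hdist_le:
  fixes A B :: "'a::metric_space set"
  assumes "A \<noteq> {}" "B \<noteq> {}"
    and "\<forall>a\<in>A. \<exists>b\<in>B. dist a b \<le> r" and "\<forall>b\<in>B. \<exists>a\<in>A. dist b a \<le> r"
  shows "hdist A B \<le> r"
proof -
  have "(SUP a\<in>A. infdist a B) \<le> r"
    using assms by (intro cSUP_least) (auto intro: order_trans[OF infdist_le])
  moreover have "(SUP b\<in>B. infdist b A) \<le> r"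
    using assms by (intro cSUP_least) (auto intro: order_trans[OF infdist_le])
  ultimately show ?thesis by (simp add: hdist_def)
qed

lemma hdist_self: "A \<noteq> {} \<Longrightarrow> hdist A A \<le> 0"
  by (rule hdist_le) auto

lemma hdist_sym: "hdist A B = hdist B A"
  by (simp add: hdist_def max.commute)

lemma infdist_le_hdist:
  fixes A B :: "'a::metric_space set"
  assumes "finite A" "a \<in> A"
  shows "infdist a B \<le> hdist A B"
proof -
  have "infdist a B \<le> (SUP a\<in>A. infdist a B)"
    using assms by (intro cSUP_upper) auto
  then show ?thesis by (simp add: hdist_def)
qed

lemma hdist_half:
  fixes A B C :: "'a::metric_space set"
  assumes "finite A" "finite B" "B \<noteq> {}" "a \<in> A"
  shows "infdist a C \<le> hdist A B + hdist B C"
proof -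
  have "infdist a C - hdist B C \<le> infdist a B"
    unfolding infdist_notempty[OF assms(3)]
  proof (rule cINF_greatest)
    show "B \<noteq> {}" by fact
    fix b assume b: "b \<in> B"
    have "infdist a C \<le> infdist b C + dist a b" by (rule infdist_triangle)
    moreover have "infdist b C \<le> hdist B C" using b assms infdist_le_hdist by blast
    ultimately show "infdist a C - hdist B C \<le> dist a b" by simp
  qed
  moreover have "infdist a B \<le> hdist A B" using assms infdist_le_hdist by blast
  ultimately show ?thesis by simp
qed

lemma hdist_tri:
  fixes A B C :: "'a::metric_space set"
  assumes "finite A" "finite B" "finite C" "A \<noteq> {}" "B \<noteq> {}" "C \<noteq> {}"
  shows "hdist A C \<le> hdist A B + hdist B C"
proof -
  have "(SUP a\<in>A. infdist a C) \<le> hdist A B + hdist B C"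
    using assms by (intro cSUP_least) (auto intro: hdist_half)
  moreover have "(SUP c\<in>C. infdist c A) \<le> hdist A B + hdist B C"
    using assms hdist_half[of C B c A for c] hdist_sym
    by (intro cSUP_least) (auto simp: add.commute hdist_sym[of C B] hdist_sym[of B A])
  ultimately show ?thesis by (simp add: hdist_def)
qed


lemma Ran_fin:
  assumes "B \<in> Ran X f1 f2" "f1 ` X \<subseteq> X" "f2 ` X \<subseteq> X"
  shows "finite B \<and> B \<noteq> {} \<and> B \<subseteq> X"
proof -
  obtain n z where "B = Fpow f1 f2 n {z}" "z \<in> X" using assms(1) by (auto simp: Ran_def)
  then show ?thesis using Fpow_fin[of "{z}" X f1 f2 n] assms by simp
qed

lemma cm_imp_m:
  fixes X :: "'a::metric_space set" and f1 f2 :: "'a \<Rightarrow> 'a"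
  assumes "f1 ` X \<subseteq> X" "f2 ` X \<subseteq> X" "has_shadowing X f1 f2" "chain_mixing X f1 f2"
  shows "mixing X f1 f2"
  unfolding mixing_def
proof (intro allI impI)
  fix U \<U> assume H: "openin (top_of_set X) U \<and> U \<noteq> {} \<and> open_in_Ran X f1 f2 \<U> \<and> \<U> \<noteq> {}"
  then obtain x where x: "x \<in> U" by auto
  have UX: "U \<subseteq> X" using H by (meson openin_imp_subset)
  obtain e1 where e1: "e1 > 0" "\<forall>x'\<in>X. dist x' x < e1 \<longrightarrow> x' \<in> U"
    using H x unfolding openin_euclidean_subtopology_iff by blast
  obtain A where A: "A \<in> \<U>" using H by auto
  have AR: "A \<in> Ran X f1 f2" using H A by (auto simp: open_in_Ran_def)
  obtain e2 where e2: "e2 > 0" "\<forall>B\<in>Ran X f1 f2. hdist A B < e2 \<longrightarrow> B \<in> \<U>"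
    using H A unfolding open_in_Ran_def by blast
  define \<epsilon> where "\<epsilon> = min e1 e2"
  have "\<epsilon> > 0" using e1 e2 by (simp add: \<epsilon>_def)
  then obtain \<delta> where d: "\<delta> > 0" "\<forall>C. pseudo_orbit X f1 f2 \<delta> C \<longrightarrow>
     (\<exists>y\<in>X. \<forall>n. hdist (Fpow f1 f2 n {y}) (C n) < \<epsilon>)"
    using assms(3) unfolding has_shadowing_def by blast
  have xX: "x \<in> X" using x UX by auto
  obtain N where N: "N \<ge> 1" "\<forall>n\<ge>N. \<exists>C. is_chain X f1 f2 \<delta> x A n C"
    using assms(4) xX AR d(1) unfolding chain_mixing_def by blast
  have Afin: "finite A \<and> A \<noteq> {} \<and> A \<subseteq> X" using Ran_fin[OF AR assms(1,2)] .
  show "\<exists>N\<ge>1. \<forall>n\<ge>N. \<exists>u\<in>U. Fpow f1 f2 n {u} \<in> \<U>"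
  proof (intro exI[of _ N] conjI allI impI)
    show "1 \<le> N" by fact
    fix n assume n: "N \<le> n"
    then obtain C where C: "is_chain X f1 f2 \<delta> x A n C" using N by blast
    have C0: "C 0 = {x}" and Cn: "C n = A" and CK: "\<forall>i\<le>n. C i \<in> KX X"
      and Cs: "\<forall>i<n. hdist (Fimg f1 f2 (C i)) (C (Suc i)) \<le> \<delta>"
      using C unfolding is_chain_def by blast+
    define D where "D j = (if j \<le> n then C j else Fpow f1 f2 (j - n) A)" for j
    have D0: "D 0 = {x}" unfolding D_def using C0 by simp
    have DK: "D j \<in> KX X" for j
    proof (cases "j \<le> n")
      case True then show ?thesis using CK unfolding D_def by simp
    next
      case False then show ?thesis using Fpow_fin[of A X f1 f2 "j - n"] Afin assms(1,2)
        by (simp add: D_def fin_KX)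
    qed
    have "pseudo_orbit X f1 f2 \<delta> D"
      unfolding pseudo_orbit_def
    proof (intro conjI allI)
      fix j
      show "D j \<in> KX X" by (rule DK)
      show "hdist (Fimg f1 f2 (D j)) (D (Suc j)) \<le> \<delta>"
      proof (cases "j < n")
        case True
        then have "D j = C j" "D (Suc j) = C (Suc j)" unfolding D_def by simp_all
        then show ?thesis using Cs[rule_format, of j] True by simp
      next
        case False
        have ea: "D (Suc j) = Fpow f1 f2 (Suc (j - n)) A"
          unfolding D_def using False by (simp add: Suc_diff_le)
        have eb: "D j = Fpow f1 f2 (j - n) A"
        proof (cases "j = n")
          case True then show ?thesis using Cn unfolding D_def by simp
        next
          case F2: False then show ?thesis using False unfolding D_def by simp
        qed
        have e: "D (Suc j) = Fimg f1 f2 (D j)" unfolding ea eb by (simp only: Fpow_Suc)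
        have ne: "D (Suc j) \<noteq> {}" using DK[of "Suc j"] by (simp add: KX_def)
        have "hdist (D (Suc j)) (D (Suc j)) \<le> 0" by (rule hdist_self[OF ne])
        then show ?thesis unfolding e[symmetric] using d(1) by linarith
      qed
    next
      show "\<exists>x. D 0 = {x}" using D0 by blast
    qed
    then obtain y where y: "y \<in> X" "\<forall>j. hdist (Fpow f1 f2 j {y}) (D j) < \<epsilon>" using d by blast
    have "hdist {y} {x} < \<epsilon>" using y(2)[rule_format, of 0] by (simp only: D0 Fpow_0)
    then have "dist y x < e1" by (simp add: hdist_def \<epsilon>_def)
    then have "y \<in> U" using e1(2) y(1) by simp
    moreover have "hdist (Fpow f1 f2 n {y}) A < e2"
      using y(2)[rule_format, of n] Cn unfolding D_def \<epsilon>_def by simp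
    moreover have "Fpow f1 f2 n {y} \<in> Ran X f1 f2"
    proof -
      have "\<exists>m z. Fpow f1 f2 n {y} = Fpow f1 f2 m {z} \<and> m \<ge> 1 \<and> z \<in> X"
        using n N(1) y(1) by (intro exI[of _ n] exI[of _ y]) simp
      then show ?thesis unfolding Ran_def by (simp only: mem_Collect_eq)
    qed
    ultimately show "\<exists>u\<in>U. Fpow f1 f2 n {u} \<in> \<U>" using e2(2) hdist_sym[of A "Fpow f1 f2 n {y}"] by (metis (no_types))
  qed
qed


lemma m_imp_cm:
  fixes X :: "'a::metric_space set" and f1 f2 :: "'a \<Rightarrow> 'a"
  assumes c1: "continuous_on X f1" and c2: "continuous_on X f2"
    and i1: "f1 ` X \<subseteq> X" and i2: "f2 ` X \<subseteq> X" and M: "mixing X f1 f2"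
  shows "chain_mixing X f1 f2"
  unfolding chain_mixing_def
proof (intro ballI allI impI)
  fix x A and \<delta> :: real assume x: "x \<in> X" and AR: "A \<in> Ran X f1 f2" and d: "\<delta> > 0"
  have Afin: "finite A \<and> A \<noteq> {} \<and> A \<subseteq> X" using Ran_fin[OF AR i1 i2] .
  obtain \<eta>1 where h1: "\<eta>1 > 0" "\<forall>x'\<in>X. dist x' x < \<eta>1 \<longrightarrow> dist (f1 x') (f1 x) < \<delta>"
    using c1 x d unfolding continuous_on_iff by blast
  obtain \<eta>2 where h2: "\<eta>2 > 0" "\<forall>x'\<in>X. dist x' x < \<eta>2 \<longrightarrow> dist (f2 x') (f2 x) < \<delta>"
    using c2 x d unfolding continuous_on_iff by blast
  define U where "U = X \<inter> ball x (min \<eta>1 \<eta>2)"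
  define \<U> where "\<U> = {B \<in> Ran X f1 f2. hdist A B < \<delta>}"
  have oU: "openin (top_of_set X) U" unfolding U_def by (rule openin_open_Int) simp
  have neU: "U \<noteq> {}" unfolding U_def using x h1(1) h2(1) by auto
  have oR: "open_in_Ran X f1 f2 \<U>"
    unfolding open_in_Ran_def
  proof (intro conjI ballI)
    show "\<U> \<subseteq> Ran X f1 f2" unfolding \<U>_def by blast
    fix B assume B: "B \<in> \<U>"
    then have BR: "B \<in> Ran X f1 f2" and hB: "hdist A B < \<delta>" unfolding \<U>_def by simp_all
    show "\<exists>e>0. \<forall>B'\<in>Ran X f1 f2. hdist B B' < e \<longrightarrow> B' \<in> \<U>"
    proof (intro exI[of _ "\<delta> - hdist A B"] conjI ballI impI)
      show "\<delta> - hdist A B > 0" using hB by simp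
      fix B' assume B'R: "B' \<in> Ran X f1 f2" and hB': "hdist B B' < \<delta> - hdist A B"
      have "hdist A B' \<le> hdist A B + hdist B B'"
        using Afin Ran_fin[OF BR i1 i2] Ran_fin[OF B'R i1 i2] by (intro hdist_tri) auto
      then show "B' \<in> \<U>" unfolding \<U>_def using B'R hB' by simp
    qed
  qed
  have neR: "\<U> \<noteq> {}"
  proof -
    have "hdist A A \<le> 0" using Afin hdist_self by blast
    then have "A \<in> \<U>" unfolding \<U>_def using AR d by simp
    then show ?thesis by blast
  qed
  obtain N where N: "N \<ge> 1" "\<forall>n\<ge>N. \<exists>u\<in>U. Fpow f1 f2 n {u} \<in> \<U>"
    using M oU neU oR neR unfolding mixing_def by blast
  show "\<exists>N\<ge>1. \<forall>n\<ge>N. \<exists>C. is_chain X f1 f2 \<delta> x A n C"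
  proof (intro exI[of _ "max N 2"] conjI allI impI)
    show "1 \<le> max N 2" by simp
    fix n assume n: "max N 2 \<le> n"
    then obtain u where u: "u \<in> U" "Fpow f1 f2 n {u} \<in> \<U>" using N by auto
    have uX: "u \<in> X" using u unfolding U_def by simp
    have du: "dist u x < \<eta>1" "dist u x < \<eta>2" using u unfolding U_def by (auto simp: dist_commute)
    have hu: "hdist A (Fpow f1 f2 n {u}) < \<delta>" using u unfolding \<U>_def by simp
    define C where "C i = (if i = 0 then {x} else if i < n then Fpow f1 f2 i {u} else A)" for i
    have Fu: "finite (Fpow f1 f2 i {u}) \<and> Fpow f1 f2 i {u} \<noteq> {} \<and> Fpow f1 f2 i {u} \<subseteq> X" for i
      using Fpow_fin[of "{u}" X f1 f2 i] uX i1 i2 by simp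
    show "\<exists>C. is_chain X f1 f2 \<delta> x A n C"
      unfolding is_chain_def
    proof (intro exI[of _ C] conjI allI impI)
      show "C 0 = {x}" unfolding C_def by simp
      show "C n = A" unfolding C_def using n by simp
      fix i
      show "i \<le> n \<Longrightarrow> C i \<in> KX X"
        unfolding C_def using x Afin Fu[of i] by (auto intro: fin_KX)
      assume i: "i < n"
      show "hdist (Fimg f1 f2 (C i)) (C (Suc i)) \<le> \<delta>"
      proof (cases "i = 0")
        case True
        have c1': "C (Suc i) = {f1 u, f2 u}" using True n unfolding C_def
          by (auto simp: Fpow_def Fimg_def)
        have c0: "Fimg f1 f2 (C i) = {f1 x, f2 x}" using True unfolding C_def by (auto simp: Fimg_def)
        have a1: "dist (f1 u) (f1 x) < \<delta>" using h1(2) uX du by blast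
        have a2: "dist (f2 u) (f2 x) < \<delta>" using h2(2) uX du by blast
        have "hdist {f1 x, f2 x} {f1 u, f2 u} \<le> \<delta>"
          using a1 a2 by (intro hdist_le) (auto simp: dist_commute)
        then show ?thesis using c1' c0 by simp
      next
        case False
        have ci: "C i = Fpow f1 f2 i {u}" using False i unfolding C_def by simp
        show ?thesis
        proof (cases "Suc i < n")
          case True
          have "C (Suc i) = Fimg f1 f2 (C i)" using True ci unfolding C_def by (simp add: Fpow_Suc)
          moreover have "Fimg f1 f2 (C i) \<noteq> {}" using Fu[of "Suc i"] ci by (simp add: Fpow_Suc)
          ultimately show ?thesis using hdist_self d by (metis order.trans less_imp_le)
        next
          case F2: False
          then have sn: "Suc i = n" using i by simp
          have "C (Suc i) = A" using sn unfolding C_def by simp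
          moreover have "Fimg f1 f2 (C i) = Fpow f1 f2 n {u}" unfolding ci sn[symmetric] by (simp add: Fpow_Suc)
          ultimately show ?thesis using hu hdist_sym[of A "Fpow f1 f2 n {u}"] by simp
        qed
      qed
    qed
  qed
qed

theorem theorem5p1:
  fixes X :: "'a::metric_space set" and f1 f2 :: "'a \<Rightarrow> 'a"
  assumes "compact X"
    and "continuous_on X f1" and "f1 ` X \<subseteq> X"
    and "continuous_on X f2" and "f2 ` X \<subseteq> X"
    and "has_shadowing X f1 f2"
  shows "chain_mixing X f1 f2 \<longleftrightarrow> mixing X f1 f2"
  using cm_imp_m[OF assms(3,5,6)] m_imp_cm[OF assms(2,4,3,5)] by blast

end
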